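(* Let $\Omega$ be a measurable space with reference measure $\mathrm{d}\mathbf{y}$, let $\Theta$ be a parameter set, and for each $\bm{\theta}\in\Theta$ let $f_{\bm{\theta}}(\cdot\mid\cdot):\Omega\times\Omega\to\mathbb{R}$ be such that $0<\int_\Omega\exp\{f_{\bm{\theta}}(\mathbf{y}\mid\mathbf{u})\}\,\mathrm{d}\mathbf{y}<\infty$ for all $\mathbf{u}\in\Omega$. Given a fixed initial point $\mathbf{y}_0\in\Omega$ and observations $\mathbf{y}_1,\ldots,\mathbf{y}_n\in\Omega$, define $$\mathcal{L}(\bm{\theta})=\sum_{t=1}^n\left[f_{\bm{\theta}}(\mathbf{y}_t\mid\mathbf{y}_{t-1})-\log\int_\Omega\exp\{f_{\bm{\theta}}(\mathbf{y}\mid\mathbf{y}_{t-1})\}\,\mathrm{d}\mathbf{y}\right]$$ and, for $\bm{\theta}\in\Theta$ and $\bm{\nu}=(\nu_0,\ldots,\nu_{n-1})\in\mathbb{R}^n$, $$\mathcal{M}(\bm{\theta},\bm{\nu})=\sum_{t=1}^n\{f_{\bm{\theta}}(\mathbf{y}_t\mid\mathbf{y}_{t-1})+\nu_{t-1}\}-\int_\Omega\left[\sum_{t=1}^n\exp\{f_{\bm{\theta}}(\mathbf{y}\mid\mathbf{y}_{t-1})+\nu_{t-1}\}\right]\mathrm{d}\mathbf{y}.$$ Then the set of points $\bm{\theta}^\star\in\operatorname{argmax}_{\bm{\theta}\in\Theta}\mathcal{L}(\bm{\theta})$ coincides with the set of points $\tilde{\bm{\theta}}$ such that $(\tilde{\bm{\theta}},\bm{\nu}^\star)\in\operatorname{argmax}_{\bm{\theta}\in\Theta,\bm{\nu}\in\mathbb{R}^n}\mathcal{M}(\bm{\theta},\bm{\nu})$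 for some $\bm{\nu}^\star\in\mathbb{R}^n$.
   Context: $\mathcal{L}$ is the log-likelihood of a Markov chain with unnormalised transition density $p_{\bm{\theta}}(\mathbf{y}_t\mid\mathbf{y}_{t-1})\propto\exp\{f_{\bm{\theta}}(\mathbf{y}_t\mid\mathbf{y}_{t-1})\}$, the initial point $\mathbf{y}_0$ being treated as a constant. *)

theory Defs
  imports "HOL-Analysis.Analysis"
begin

text \<open>f th y u stands for f_theta(y | u). Observations y 1..n, initial point y 0.\<close>

definition loglik :: "'a measure \<Rightarrow> ('p \<Rightarrow> 'a \<Rightarrow> 'a \<Rightarrow> real) \<Rightarrow> (nat \<Rightarrow> 'a) \<Rightarrow> nat \<Rightarrow> 'p \<Rightarrow> real" where
  "loglik M f y n th = (\<Sum>t=1..n. f th (y t) (y (t-1)) - ln (\<integral>x. exp (f th x (y (t-1))) \<partial>M))"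

definition Mobj :: "'a measure \<Rightarrow> ('p \<Rightarrow> 'a \<Rightarrow> 'a \<Rightarrow> real) \<Rightarrow> (nat \<Rightarrow> 'a) \<Rightarrow> nat \<Rightarrow> 'p \<Rightarrow> (nat \<Rightarrow> real) \<Rightarrow> real" where
  "Mobj M f y n th \<nu> = (\<Sum>t=1..n. f th (y t) (y (t-1)) + \<nu> (t-1))
      - (\<integral>x. (\<Sum>t=1..n. exp (f th x (y (t-1)) + \<nu> (t-1))) \<partial>M)"

end

theory Submission
  imports Defs
begin

lemma pt_ineq:
  fixes v Z :: real assumes "Z > 0"
  shows "v - exp v * Z \<le> - ln Z - 1"
proof -
  have "exp v * Z = exp (v + ln Z)" using assms by (simp add: exp_add)
  moreover have "exp (v + ln Z) \<ge> 1 + (v + ln Z)" by (rule exp_ge_add_one_self)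
  ultimately show ?thesis by linarith
qed

theorem theorem2:
  fixes M :: "'a measure" and \<Theta> :: "'p set" and f :: "'p \<Rightarrow> 'a \<Rightarrow> 'a \<Rightarrow> real"
    and y :: "nat \<Rightarrow> 'a" and n :: nat
  assumes integ: "\<And>th u. th \<in> \<Theta> \<Longrightarrow> u \<in> space M \<Longrightarrow> integrable M (\<lambda>x. exp (f th x u))"
    and pos: "\<And>th u. th \<in> \<Theta> \<Longrightarrow> u \<in> space M \<Longrightarrow> 0 < (\<integral>x. exp (f th x u) \<partial>M)"
    and obs: "\<And>t. t \<le> n \<Longrightarrow> y t \<in> space M"
  shows "{th \<in> \<Theta>. \<forall>th' \<in> \<Theta>. loglik M f y n th' \<le> loglik M f y n th}
       = {th \<in> \<Theta>. \<exists>\<nu>. \<forall>th' \<in> \<Theta>. \<forall>\<nu>'. Mobj M f y n th' \<nu>' \<le> Mobj M f y n th \<nu>}"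
proof -
  define Z where "Z th t = (\<integral>x. exp (f th x (y (t-1))) \<partial>M)" for th t
  have sp: "y (t-1) \<in> space M" if "t \<in> {1..n}" for t using obs that by auto
  have Zpos: "Z th t > 0" if "th \<in> \<Theta>" "t \<in> {1..n}" for th t
    using pos[OF that(1) sp[OF that(2)]] by (simp add: Z_def)
  have Mform: "Mobj M f y n th \<nu> = (\<Sum>t=1..n. f th (y t) (y (t-1)) + \<nu> (t-1) - exp (\<nu> (t-1)) * Z th t)"
    if "th \<in> \<Theta>" for th \<nu>
  proof -
    have "(\<integral>x. (\<Sum>t=1..n. exp (f th x (y (t-1)) + \<nu> (t-1))) \<partial>M)
        = (\<Sum>t=1..n. \<integral>x. exp (f th x (y (t-1)) + \<nu> (t-1)) \<partial>M)"
    proof (rule Bochner_Integration.integral_sum[where M=M and I="{1..n}" and f="\<lambda>t x. exp (f th x (y (t-1)) + \<nu> (t-1))"])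
      fix i assume i: "i \<in> {1..n}"
      show "integrable M (\<lambda>x. exp (f th x (y (i-1)) + \<nu> (i-1)))"
        unfolding exp_add by (intro integrable_mult_left integ[OF that sp[OF i]])
    qed
    also have "\<dots> = (\<Sum>t=1..n. exp (\<nu> (t-1)) * Z th t)"
      by (rule sum.cong) (simp_all add: exp_add Z_def mult.commute)
    finally show ?thesis unfolding Mobj_def by (simp add: sum_subtractf)
  qed
  have Lform: "loglik M f y n th = (\<Sum>t=1..n. f th (y t) (y (t-1)) - ln (Z th t))" for th
    by (simp add: loglik_def Z_def)
  have upper: "Mobj M f y n th \<nu> \<le> loglik M f y n th - real n" if "th \<in> \<Theta>" for th \<nu>
  proof -
    have "Mobj M f y n th \<nu> \<le> (\<Sum>t=1..n. f th (y t) (y (t-1)) - ln (Z th t) - 1)"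
      unfolding Mform[OF that]
      by (rule sum_mono) (use pt_ineq Zpos[OF that] in fastforce)
    also have "\<dots> = loglik M f y n th - real n" by (simp add: Lform sum_subtractf)
    finally show ?thesis .
  qed
  define nu where "nu th s = - ln (Z th (Suc s))" for th s
  have attain: "Mobj M f y n th (nu th) = loglik M f y n th - real n" if "th \<in> \<Theta>" for th
  proof -
    have "Mobj M f y n th (nu th) = (\<Sum>t=1..n. f th (y t) (y (t-1)) - ln (Z th t) - 1)"
      unfolding Mform[OF that]
    proof (rule sum.cong)
      fix t assume t: "t \<in> {1..n}"
      then have s: "Suc (t-1) = t" by auto
      have "exp (- ln (Z th t)) * Z th t = 1" using Zpos[OF that t]
        by (simp add: exp_minus field_simps)
      then show "f th (y t) (y (t-1)) + nu th (t-1) - exp (nu th (t-1)) * Z th t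
          = f th (y t) (y (t-1)) - ln (Z th t) - 1"
      proof -
        have e: "nu th (t-1) = - ln (Z th t)" using s nu_def by metis
        show ?thesis unfolding e using \<open>exp (- ln (Z th t)) * Z th t = 1\<close> by linarith
      qed
    qed simp
    also have "\<dots> = loglik M f y n th - real n" by (simp add: Lform sum_subtractf)
    finally show ?thesis .
  qed
  show ?thesis
  proof (intro set_eqI iffI)
    fix th assume "th \<in> {th \<in> \<Theta>. \<forall>th' \<in> \<Theta>. loglik M f y n th' \<le> loglik M f y n th}"
    then have th: "th \<in> \<Theta>" and mx: "\<forall>th' \<in> \<Theta>. loglik M f y n th' \<le> loglik M f y n th" by auto
    have "\<forall>th' \<in> \<Theta>. \<forall>\<nu>'. Mobj M f y n th' \<nu>' \<le> Mobj M f y n th (nu th)"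
      using upper mx attain[OF th] by (smt (verit))
    with th show "th \<in> {th \<in> \<Theta>. \<exists>\<nu>. \<forall>th' \<in> \<Theta>. \<forall>\<nu>'. Mobj M f y n th' \<nu>' \<le> Mobj M f y n th \<nu>}" by blast
  next
    fix th assume "th \<in> {th \<in> \<Theta>. \<exists>\<nu>. \<forall>th' \<in> \<Theta>. \<forall>\<nu>'. Mobj M f y n th' \<nu>' \<le> Mobj M f y n th \<nu>}"
    then obtain \<nu> where th: "th \<in> \<Theta>" and mx: "\<forall>th' \<in> \<Theta>. \<forall>\<nu>'. Mobj M f y n th' \<nu>' \<le> Mobj M f y n th \<nu>" by auto
    have "\<forall>th' \<in> \<Theta>. loglik M f y n th' \<le> loglik M f y n th"
    proof
      fix th' assume th': "th' \<in> \<Theta>"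
      have "loglik M f y n th' - real n = Mobj M f y n th' (nu th')" using attain[OF th'] by simp
      also have "\<dots> \<le> Mobj M f y n th \<nu>" using mx th' by blast
      also have "\<dots> \<le> loglik M f y n th - real n" by (rule upper[OF th])
      finally show "loglik M f y n th' \<le> loglik M f y n th" by simp
    qed
    with th show "th \<in> {th \<in> \<Theta>. \<forall>th' \<in> \<Theta>. loglik M f y n th' \<le> loglik M f y n th}" by blast
  qed
qed

end
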